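(* Let $\mathcal M=(M,\le,{}^\perp)$ be a complete orthomodular lattice and $L$ an involutive submonoid of $\mathbf{Lin}(\mathcal M)$ containing all Sasaki projections $\pi_m$ ($m\in M$). Then $\mathscr P(L)=(\mathscr P(L),\bigcup,\odot,{}^*,{\sim},\{\mathrm{id}_M\})$ is an involutive generalized dynamic algebra.
   Context: For an orthomodular lattice and $m\in M$, $\pi_m(x)=m\wedge(m^\perp\vee x)$. A map $f\colon M\to M$ is linear if there is $g\colon M\to M$ (unique, written $f^*$) with $f(x)\le y^\perp\iff x\le g(y)^\perp$ for all $x,y$. $\mathbf{Lin}(\mathcal M)$ is the set of linear maps, an involutive monoid under composition, $f\mapsto f^*$, $\mathrm{id}_M$; $\pi_m\in\mathbf{Lin}(\mathcal M)$ and $\pi_m^*=\pi_m$. $\mathscr P(L)$ is the powerset of $L$ with union as join, $A\odot B=\{a\circ b\mid a\in A,b\in B\}$, $A^*=\{a^*\mid a\in A\}$, ${\sim}A=\{\pi_{(\bigvee_{a\in A}a(1))^\perp}\}$; $(\mathscr P(L),\bigcup,\odot,{}^*,\{\mathrm{id}_M\})$ is an involutive unital quantale. An involutive unital quantale is $(Q,\bigsqcup,\odot,{}^*,e)$ with $Q$ a complete join-semilattice, $\odot$ associative and distributing over arbitrary joins in each argument, $e$ a unit, ${}^*$ with $x^{**}=x$, $(x\odot y)^*=y^*\odot x^*$, $(\bigsqcup x_i)^*=\bigsqcup x_i^*$. An involutive generalized dynamic algebra is such a quantale with ${\sim}\colon K\to K$ such that for all $x,y$ and families $(x_i)$: ${\sim}(x\odot{\sim}{\sim}y)={\sim}(x\odot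 y)$; ${\sim}(\bigsqcup_i{\sim}{\sim}x_i)={\sim}(\bigsqcup_i x_i)$; $({\sim}x)^*={\sim}x$; ${\sim}{\sim}({\sim}{\sim}x\odot y)={\sim}({\sim}x\sqcup{\sim}({\sim}x\sqcup y))$. *)

theory Defs
  imports "HOL-Library.Complemented_Lattices"
begin

text \<open>The complete orthomodular lattice M is modelled as a type of class
  complete_orthomodular_lattice; the orthocomplement x^perp is written - x.\<close>

definition sasaki :: "'a::complete_orthomodular_lattice \<Rightarrow> 'a \<Rightarrow> 'a" where
  "sasaki m x = inf m (sup (- m) x)"

definition adjoint_of :: "('a::complete_orthomodular_lattice \<Rightarrow> 'a) \<Rightarrow> ('a \<Rightarrow> 'a) \<Rightarrow> bool" where
  "adjoint_of f g \<longleftrightarrow> (\<forall>x y. f x \<le> - y \<longleftrightarrow> x \<le> - g y)"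

definition linear_map :: "('a::complete_orthomodular_lattice \<Rightarrow> 'a) \<Rightarrow> bool" where
  "linear_map f \<longleftrightarrow> (\<exists>g. adjoint_of f g)"

definition adj :: "('a::complete_orthomodular_lattice \<Rightarrow> 'a) \<Rightarrow> ('a \<Rightarrow> 'a)" where
  "adj f = (THE g. adjoint_of f g)"

definition Lin :: "('a::complete_orthomodular_lattice \<Rightarrow> 'a) set" where
  "Lin = {f. linear_map f}"

definition inv_submonoid :: "('a::complete_orthomodular_lattice \<Rightarrow> 'a) set \<Rightarrow> bool" where
  "inv_submonoid L \<longleftrightarrow> L \<subseteq> Lin \<and> id \<in> L \<and> (\<forall>f\<in>L. \<forall>g\<in>L. f \<circ> g \<in> L) \<and> (\<forall>f\<in>L. adj f \<in> L)"

definition pmult :: "('a \<Rightarrow> 'a) set \<Rightarrow> ('a \<Rightarrow> 'a) set \<Rightarrow> ('a \<Rightarrow> 'a) set" where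
  "pmult A B = {a \<circ> b | a b. a \<in> A \<and> b \<in> B}"

definition pstar :: "('a::complete_orthomodular_lattice \<Rightarrow> 'a) set \<Rightarrow> ('a \<Rightarrow> 'a) set" where
  "pstar A = adj ` A"

definition ptilde :: "('a::complete_orthomodular_lattice \<Rightarrow> 'a) set \<Rightarrow> ('a \<Rightarrow> 'a) set" where
  "ptilde A = {sasaki (- (SUP a\<in>A. a top))}"

definition inv_unital_quantale ::
  "'q set \<Rightarrow> ('q \<Rightarrow> 'q \<Rightarrow> bool) \<Rightarrow> ('q set \<Rightarrow> 'q) \<Rightarrow> ('q \<Rightarrow> 'q \<Rightarrow> 'q) \<Rightarrow> ('q \<Rightarrow> 'q) \<Rightarrow> 'q \<Rightarrow> bool" where
  "inv_unital_quantale Q le J mult st e \<longleftrightarrow>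
     (\<forall>x\<in>Q. le x x) \<and>
     (\<forall>x\<in>Q. \<forall>y\<in>Q. le x y \<and> le y x \<longrightarrow> x = y) \<and>
     (\<forall>x\<in>Q. \<forall>y\<in>Q. \<forall>z\<in>Q. le x y \<and> le y z \<longrightarrow> le x z) \<and>
     (\<forall>S\<subseteq>Q. J S \<in> Q \<and> (\<forall>x\<in>S. le x (J S)) \<and> (\<forall>u\<in>Q. (\<forall>x\<in>S. le x u) \<longrightarrow> le (J S) u)) \<and>
     (\<forall>x\<in>Q. \<forall>y\<in>Q. mult x y \<in> Q) \<and>
     (\<forall>x\<in>Q. \<forall>y\<in>Q. \<forall>z\<in>Q. mult (mult x y) z = mult x (mult y z)) \<and>
     (\<forall>x\<in>Q. \<forall>S\<subseteq>Q. mult x (J S) = J ((\<lambda>y. mult x y) ` S)) \<and>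
     (\<forall>x\<in>Q. \<forall>S\<subseteq>Q. mult (J S) x = J ((\<lambda>y. mult y x) ` S)) \<and>
     e \<in> Q \<and> (\<forall>x\<in>Q. mult e x = x \<and> mult x e = x) \<and>
     (\<forall>x\<in>Q. st x \<in> Q) \<and>
     (\<forall>x\<in>Q. st (st x) = x) \<and>
     (\<forall>x\<in>Q. \<forall>y\<in>Q. st (mult x y) = mult (st y) (st x)) \<and>
     (\<forall>S\<subseteq>Q. st (J S) = J (st ` S))"

definition inv_gen_dyn_alg ::
  "'q set \<Rightarrow> ('q \<Rightarrow> 'q \<Rightarrow> bool) \<Rightarrow> ('q set \<Rightarrow> 'q) \<Rightarrow> ('q \<Rightarrow> 'q \<Rightarrow> 'q) \<Rightarrow> ('q \<Rightarrow> 'q) \<Rightarrow> ('q \<Rightarrow> 'q) \<Rightarrow> 'q \<Rightarrow> bool" where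
  "inv_gen_dyn_alg Q le J mult st neg e \<longleftrightarrow>
     inv_unital_quantale Q le J mult st e \<and>
     (\<forall>x\<in>Q. neg x \<in> Q) \<and>
     (\<forall>x\<in>Q. \<forall>y\<in>Q. neg (mult x (neg (neg y))) = neg (mult x y)) \<and>
     (\<forall>S\<subseteq>Q. neg (J (neg ` neg ` S)) = neg (J S)) \<and>
     (\<forall>x\<in>Q. st (neg x) = neg x) \<and>
     (\<forall>x\<in>Q. \<forall>y\<in>Q. neg (neg (mult (neg (neg x)) y)) = neg (J {neg x, neg (J {neg x, y})}))"

end

theory Submission
  imports Defs
begin

unbundle lattice_syntax

lemma adj_sym:
  fixes f g :: "'a::complete_orthomodular_lattice \<Rightarrow> 'a"
  assumes "adjoint_of f g" shows "adjoint_of g f"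
  using assms unfolding adjoint_of_def by (metis compl_le_swap1 compl_le_swap2 ortho_involution)

lemma adj_unique:
  fixes f g h :: "'a::complete_orthomodular_lattice \<Rightarrow> 'a"
  assumes "adjoint_of f g" "adjoint_of f h" shows "g = h"
proof
  fix y
  have "- g y \<le> - h y" using assms unfolding adjoint_of_def by blast
  moreover have "- h y \<le> - g y" using assms unfolding adjoint_of_def by blast
  ultimately show "g y = h y" by (simp add: antisym)
qed

lemma adj_eq:
  fixes f g :: "'a::complete_orthomodular_lattice \<Rightarrow> 'a"
  assumes "adjoint_of f g" shows "adj f = g"
  unfolding adj_def using assms adj_unique by blast

lemma lin_adj:
  fixes f :: "'a::complete_orthomodular_lattice \<Rightarrow> 'a"
  assumes "f \<in> Lin" shows "adjoint_of f (adj f)"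
  using assms unfolding Lin_def linear_map_def using adj_eq by blast

lemma adj_mono:
  fixes f g :: "'a::complete_orthomodular_lattice \<Rightarrow> 'a"
  assumes "adjoint_of f g" "x \<le> y" shows "f x \<le> f y"
proof -
  have "f y \<le> - (- f y)" by simp
  hence "y \<le> - g (- f y)" using assms(1) unfolding adjoint_of_def by blast
  hence "x \<le> - g (- f y)" using assms(2) by simp
  hence "f x \<le> - (- f y)" using assms(1) unfolding adjoint_of_def by blast
  thus ?thesis by simp
qed

lemma adj_Sup:
  fixes f g :: "'a::complete_orthomodular_lattice \<Rightarrow> 'a"
  assumes "adjoint_of f g" shows "f (Sup S) = Sup (f ` S)"
proof (rule antisym)
  show "Sup (f ` S) \<le> f (Sup S)"
    by (rule SUP_least, rule adj_mono[OF assms], simp add: Sup_upper)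
  have "Sup S \<le> - g (- Sup (f ` S))"
  proof (rule Sup_least)
    fix s assume "s \<in> S"
    hence "f s \<le> - (- Sup (f ` S))" by (simp add: SUP_upper)
    thus "s \<le> - g (- Sup (f ` S))" using assms unfolding adjoint_of_def by blast
  qed
  hence "f (Sup S) \<le> - (- Sup (f ` S))" using assms unfolding adjoint_of_def by blast
  thus "f (Sup S) \<le> Sup (f ` S)" by simp
qed

lemma sasaki_half:
  fixes m x y :: "'a::complete_orthomodular_lattice"
  assumes "sasaki m x \<le> - y" shows "x \<le> - sasaki m y"
proof -
  have om: "- m \<squnion> (m \<sqinter> (- m \<squnion> x)) = - m \<squnion> x"
    using orthomodular[of "- m" "- m \<squnion> x"] by simp
  have "m \<sqinter> (- m \<squnion> x) \<le> m \<sqinter> - y" using assms unfolding sasaki_def by simp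
  hence "- m \<squnion> (m \<sqinter> (- m \<squnion> x)) \<le> - m \<squnion> (m \<sqinter> - y)"
    by (meson order_refl sup_mono)
  hence "x \<le> - m \<squnion> (m \<sqinter> - y)" using om by (metis le_supE)
  thus ?thesis unfolding sasaki_def by simp
qed

lemma sasaki_adj: "adjoint_of (sasaki m) (sasaki (m::'a::complete_orthomodular_lattice))"
  unfolding adjoint_of_def
  by (metis sasaki_half compl_le_swap1)

lemma sasaki_top: "sasaki m top = (m::'a::complete_orthomodular_lattice)"
  unfolding sasaki_def by simp

lemma pmult_mem: "f \<in> pmult A B \<longleftrightarrow> (\<exists>a\<in>A. \<exists>b\<in>B. f = a \<circ> b)"
  unfolding pmult_def by blast

lemma pmult_Union_r: "pmult x (\<Union> S) = \<Union> ((\<lambda>y. pmult x y) ` S)"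
  unfolding pmult_def by blast
lemma pmult_Union_l: "pmult (\<Union> S) x = \<Union> ((\<lambda>y. pmult y x) ` S)"
  unfolding pmult_def by blast
lemma pmult_id_l: "pmult {id} x = x" unfolding pmult_def by auto
lemma pmult_id_r: "pmult x {id} = x" unfolding pmult_def by auto
lemma pmult_I: "a \<in> A \<Longrightarrow> b \<in> B \<Longrightarrow> a \<circ> b \<in> pmult A B"
  unfolding pmult_mem by blast
lemma pmult_E: "f \<in> pmult A B \<Longrightarrow> (\<And>a b. a \<in> A \<Longrightarrow> b \<in> B \<Longrightarrow> f = a \<circ> b \<Longrightarrow> P) \<Longrightarrow> P"
  unfolding pmult_mem by blast
lemma pmult_assoc: "pmult (pmult A B) C = pmult A (pmult B C)"
proof (rule set_eqI, rule iffI)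
  fix f assume "f \<in> pmult (pmult A B) C"
  then obtain g c where g: "g \<in> pmult A B" "c \<in> C" "f = g \<circ> c" by (rule pmult_E)
  then obtain a b where "a \<in> A" "b \<in> B" "g = a \<circ> b" by (blast elim: pmult_E)
  hence "a \<circ> (b \<circ> c) \<in> pmult A (pmult B C)" using g by (intro pmult_I)
  thus "f \<in> pmult A (pmult B C)" using g `g = a \<circ> b` by (simp add: comp_assoc)
next
  fix f assume "f \<in> pmult A (pmult B C)"
  then obtain a g where g: "a \<in> A" "g \<in> pmult B C" "f = a \<circ> g" by (rule pmult_E)
  then obtain b c where "b \<in> B" "c \<in> C" "g = b \<circ> c" by (blast elim: pmult_E)
  hence "(a \<circ> b) \<circ> c \<in> pmult (pmult A B) C" using g by (intro pmult_I)
  thus "f \<in> pmult (pmult A B) C" using g `g = b \<circ> c` by (simp add: comp_assoc)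
qed

definition sig :: "('a::complete_orthomodular_lattice \<Rightarrow> 'a) set \<Rightarrow> 'a" where
  "sig A = (SUP a\<in>A. a top)"

lemma ptilde_sig: "ptilde A = {sasaki (- sig A)}"
  unfolding ptilde_def sig_def by simp

lemma sig_ptilde: "sig (ptilde A) = - sig A"
  unfolding ptilde_sig by (simp add: sig_def sasaki_top)

lemma sig_single: "sig {sasaki m} = m"
  unfolding sig_def by (simp add: sasaki_top)

lemma sig_union: "sig (A \<union> B) = sig A \<squnion> sig B"
  unfolding sig_def by (simp add: SUP_union)

lemma sig_Union: "sig (\<Union> S) = (SUP A\<in>S. sig A)"
  unfolding sig_def by (rule antisym) (auto intro!: SUP_least SUP_upper2)

lemma sig_pmult:
  assumes "A \<subseteq> Lin"
  shows "sig (pmult A B) = (SUP a\<in>A. a (sig B))"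
proof -
  have e: "a (sig B) = (SUP b\<in>B. a (b top))" if "a \<in> A" for a
    using adj_Sup[OF lin_adj[of a], of "(\<lambda>b. b top) ` B"] that assms
    unfolding sig_def by (auto simp: image_image)
  have "sig (pmult A B) = (SUP a\<in>A. SUP b\<in>B. a (b top))"
    unfolding sig_def pmult_def
    by (rule antisym) (auto intro!: SUP_least SUP_upper2 simp: SUP_upper)
  also have "\<dots> = (SUP a\<in>A. a (sig B))" using e by simp
  finally show ?thesis .
qed

theorem lemma3p9:
  fixes L :: "('a::complete_orthomodular_lattice \<Rightarrow> 'a) set"
  assumes "inv_submonoid L"
    and "\<forall>m. sasaki m \<in> L"
  shows "inv_gen_dyn_alg (Pow L) (\<subseteq>) Union pmult pstar ptilde {id}"
proof -
  have LL: "L \<subseteq> Lin" and idL: "id \<in> L"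
    and comp: "\<And>f g. f \<in> L \<Longrightarrow> g \<in> L \<Longrightarrow> f \<circ> g \<in> L"
    and adjL: "\<And>f. f \<in> L \<Longrightarrow> adj f \<in> L"
    using assms(1) unfolding inv_submonoid_def by blast+
  have aa: "adj (adj f) = f" if "f \<in> L" for f
  proof -
    have "f \<in> Lin" using that LL by blast
    hence "adjoint_of f (adj f)" by (rule lin_adj)
    hence "adjoint_of (adj f) f" by (rule adj_sym)
    thus ?thesis by (rule adj_eq)
  qed
  have acomp: "adj (f \<circ> g) = adj g \<circ> adj f" if "f \<in> L" "g \<in> L" for f g
  proof (rule adj_eq)
    have "f \<in> Lin" "g \<in> Lin" using that LL by blast+
    hence af: "adjoint_of f (adj f)" and ag: "adjoint_of g (adj g)" by (simp_all add: lin_adj)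
    show "adjoint_of (f \<circ> g) (adj g \<circ> adj f)" unfolding adjoint_of_def
    proof (intro allI)
      fix x y
      have "f (g x) \<le> - y \<longleftrightarrow> g x \<le> - adj f y" using af unfolding adjoint_of_def by blast
      also have "\<dots> \<longleftrightarrow> x \<le> - adj g (adj f y)" using ag unfolding adjoint_of_def by blast
      finally show "(f \<circ> g) x \<le> - y \<longleftrightarrow> x \<le> - (adj g \<circ> adj f) y" by simp
    qed
  qed
  have sL: "sasaki m \<in> L" for m :: 'a using assms(2) by blast
  have sLin: "{sasaki m} \<subseteq> Lin" for m :: 'a using sL LL by blast
  have c1: "\<forall>x\<in>Pow L. \<forall>y\<in>Pow L. pmult x y \<in> Pow L"
    using comp by (auto elim!: pmult_E)
  have c2: "\<forall>x\<in>Pow L. pstar (pstar x) = x"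
  proof
    fix x assume x: "x \<in> Pow L"
    have "(\<lambda>f. adj (adj f)) ` x = (\<lambda>f. f) ` x" using x aa by (intro image_cong) auto
    thus "pstar (pstar x) = x" unfolding pstar_def by (simp add: image_image)
  qed
  have c3: "\<forall>x\<in>Pow L. \<forall>y\<in>Pow L. pstar (pmult x y) = pmult (pstar y) (pstar x)"
  proof (intro ballI set_eqI iffI)
    fix x y f assume x: "x \<in> Pow L" and y: "y \<in> Pow L"
    { assume "f \<in> pstar (pmult x y)"
      then obtain g where g: "g \<in> pmult x y" "f = adj g" unfolding pstar_def by blast
      then obtain a b where ab: "a \<in> x" "b \<in> y" "g = a \<circ> b" by (blast elim: pmult_E)
      have "a \<in> L" "b \<in> L" using ab x y by auto
      hence "f = adj b \<circ> adj a" using g ab by (simp add: acomp)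
      moreover have "adj b \<circ> adj a \<in> pmult (pstar y) (pstar x)"
        using ab unfolding pstar_def by (intro pmult_I imageI)
      ultimately show "f \<in> pmult (pstar y) (pstar x)" by simp }
    { assume "f \<in> pmult (pstar y) (pstar x)"
      then obtain b' a' where ab': "b' \<in> pstar y" "a' \<in> pstar x" "f = b' \<circ> a'" by (rule pmult_E)
      then obtain a b where ab: "a \<in> x" "b \<in> y" "a' = adj a" "b' = adj b" unfolding pstar_def by blast
      have "a \<in> L" "b \<in> L" using ab x y by auto
      hence "f = adj (a \<circ> b)" using ab ab' by (simp add: acomp)
      moreover have "a \<circ> b \<in> pmult x y" using ab by (intro pmult_I)
      ultimately show "f \<in> pstar (pmult x y)" unfolding pstar_def by blast }
  qed
  have Q: "inv_unital_quantale (Pow L) (\<subseteq>) Union pmult pstar {id}"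
    unfolding inv_unital_quantale_def
    apply (intro conjI c1 c2 c3)
    using idL adjL by (auto simp: pmult_assoc pmult_id_l pmult_id_r pstar_def
        pmult_Union_l pmult_Union_r)
  show ?thesis
    unfolding inv_gen_dyn_alg_def
  proof (intro conjI ballI allI impI Q)
    show "ptilde x \<in> Pow L" for x using sL unfolding ptilde_def by auto
    show "ptilde (pmult x (ptilde (ptilde y))) = ptilde (pmult x y)" if "x \<in> Pow L" for x y
    proof -
      have "x \<subseteq> Lin" using that LL by auto
      thus ?thesis unfolding ptilde_sig
        by (simp add: sig_pmult sig_single)
    qed
    show "ptilde (\<Union> (ptilde ` ptilde ` S)) = ptilde (\<Union> S)" for S
      unfolding ptilde_sig by (simp add: sig_Union sig_single image_image)
    show "pstar (ptilde x) = ptilde x" for x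
      unfolding ptilde_def pstar_def using adj_eq[OF sasaki_adj] by simp
    show "ptilde (ptilde (pmult (ptilde (ptilde x)) y)) =
          ptilde (\<Union> {ptilde x, ptilde (\<Union> {ptilde x, y})})" for x y :: "('a \<Rightarrow> 'a) set"
    proof -
      have l: "ptilde (ptilde (pmult (ptilde (ptilde x)) y)) = {sasaki (sasaki (sig x) (sig y))}"
      proof -
        have "sig (pmult {sasaki (sig x)} y) = sasaki (sig x) (sig y)"
          using sig_pmult[OF sLin[of "sig x"], of y] by simp
        thus ?thesis by (simp add: ptilde_sig sig_single)
      qed
      have u: "\<And>A B. \<Union> {A, B} = A \<union> B" by blast
      have "sig (\<Union> {ptilde x, ptilde (\<Union> {ptilde x, y})}) = - sig x \<squnion> - (- sig x \<squnion> sig y)"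
        by (simp only: u sig_union sig_ptilde)
      hence "ptilde (\<Union> {ptilde x, ptilde (\<Union> {ptilde x, y})}) = {sasaki (sasaki (sig x) (sig y))}"
        by (simp add: ptilde_sig sasaki_def)
      with l show ?thesis by simp
    qed
  qed
qed

end
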